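(* Let $N\ge 1$ be an integer, $\alpha\in(0,1]$, and $\lambda,c$ real constants with $c>0$. Consider the $N$-dimensional fractional Klein–Gordon equation $$\left(\frac{\partial^2}{\partial t^2}-c^2\Delta\right)^{\alpha}u_{\alpha}(\mathbf{x},t)=-\lambda^2u_{\alpha}(\mathbf{x},t),\qquad \mathbf{x}=(x_1,\dots,x_N)\in\mathbb{R}^N,$$ for functions of the form $u_\alpha(\mathbf{x},t)=f(w)$ with $w=\left(c^2t^2-\sum_{j=1}^N x_j^2\right)^{1/2}>0$, for which the equation means $$\left(\frac{d^2}{dw^2}+\frac{N}{w}\frac{d}{dw}\right)^{\alpha}f(w)=-\frac{\lambda^2}{c^{2\alpha}}f(w),\quad\text{where}\quad \left(\frac{d^2}{dw^2}+\frac{N}{w}\frac{d}{dw}\right)^{\alpha}f(w):=4^{\alpha}w^{-2\alpha}I_2^{0,-\alpha}I_2^{\frac{N-1}{2},-\alpha}f(w).$$ Then a solution is given by $$u_\alpha(\mathbf{x},t)=\sum_{k=0}^{\infty}\left(\frac{\lambda}{2^{\alpha}c^{\alpha}}\right)^{2k}\frac{(-1)^k\left(c^2t^2-\sum_{j=1}^N x_j^2\right)^{\alpha k+\alpha-1}}{\Gamma\!\left(\alpha k+\alpha+\frac{N-1}{2}\right)\Gamma(\alpha k+\alpha)} =\left(c^2t^2-\sum_{j=1}^N x_j^2\right)^{\alpha-1}E^{(2)}_{(\alpha,\alpha),(\alpha,\alpha+\frac{N-1}{2})}\!\left[-\left(\frac{\lambda\left(c^2t^2-\sum_{j=1}^N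 x_j^2\right)^{\alpha/2}}{2^{\alpha}c^{\alpha}}\right)^{2}\right].$$
   Context: Erdélyi–Kober operators (McBride's notation): for $m>0$, $\eta\in\mathbb{R}$ and $\alpha>0$, $$I_m^{\eta,\alpha}f(x)=\frac{x^{-m\eta-m\alpha}}{\Gamma(\alpha)}\int_0^x(x^m-u^m)^{\alpha-1}u^{m\eta}f(u)\,d(u^m),$$ and for $\alpha\le 0$ recursively $I_m^{\eta,\alpha}f=(\eta+\alpha+1)I_m^{\eta,\alpha+1}f+\frac{1}{m}I_m^{\eta,\alpha+1}\left(x\frac{d}{dx}f\right)$. The fractional operator in $w$ is McBride's fractional power of the hyper-Bessel operator $w^{-N}\frac{d}{dw}w^{N}\frac{d}{dw}$ (parameters $a_1=-N,a_2=N,a_3=0$, $m=2$, $b_1=\frac{N-1}{2}$, $b_2=0$); the change of variable $w$ turns $\frac{\partial^2}{\partial t^2}-c^2\Delta$ acting on $f(w)$ into $c^2\left(\frac{d^2}{dw^2}+\frac{N}{w}\frac{d}{dw}\right)f$. The multi-index Mittag-Leffler function is $E^{(n)}_{(\alpha_i)^n,(\mu_i)^n}(z)=\sum_{k=0}^\infty\frac{z^k}{\Gamma(\alpha_1k+\mu_1)\cdots\Gamma(\alpha_nk+\mu_n)}$. *)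

theory Defs
  imports "HOL-Analysis.Analysis"
begin

text \<open>Erdelyi--Kober operator (McBride) for order alpha > 0:
  I_m^{eta,alpha} f(x) = x^(-m eta - m alpha)/Gamma(alpha) *
     int_0^x (x^m - u^m)^(alpha-1) u^(m eta) f(u) d(u^m),
  with d(u^m) = m u^(m-1) du.\<close>
definition EK_pos :: "real \<Rightarrow> real \<Rightarrow> real \<Rightarrow> (real \<Rightarrow> real) \<Rightarrow> real \<Rightarrow> real" where
  "EK_pos m \<eta> \<alpha> f x =
     x powr (- m * \<eta> - m * \<alpha>) / Gamma \<alpha> *
     integral {0..x} (\<lambda>u. (x powr m - u powr m) powr (\<alpha> - 1) * u powr (m * \<eta>) * f u
                           * (m * u powr (m - 1)))"

fun EK_rec :: "nat \<Rightarrow> real \<Rightarrow> real \<Rightarrow> real \<Rightarrow> (real \<Rightarrow> real) \<Rightarrow> real \<Rightarrow> real" where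
  "EK_rec 0 m \<eta> \<alpha> f x = EK_pos m \<eta> \<alpha> f x"
| "EK_rec (Suc n) m \<eta> \<alpha> f x =
     (\<eta> + \<alpha> + 1) * EK_rec n m \<eta> (\<alpha> + 1) f x
     + (1 / m) * EK_rec n m \<eta> (\<alpha> + 1) (\<lambda>u. u * deriv f u) x"

definition EK :: "real \<Rightarrow> real \<Rightarrow> real \<Rightarrow> (real \<Rightarrow> real) \<Rightarrow> real \<Rightarrow> real" where
  "EK m \<eta> \<alpha> f x =
     (if \<alpha> > 0 then EK_pos m \<eta> \<alpha> f x
      else EK_rec (nat (\<lfloor>- \<alpha>\<rfloor>) + 1) m \<eta> \<alpha> f x)"

definition frac_bessel_op :: "nat \<Rightarrow> real \<Rightarrow> (real \<Rightarrow> real) \<Rightarrow> real \<Rightarrow> real" where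
  "frac_bessel_op N \<alpha> f w =
     4 powr \<alpha> * w powr (- 2 * \<alpha>) *
     EK 2 0 (- \<alpha>) (EK 2 ((real N - 1) / 2) (- \<alpha>) f) w"

text \<open>Multi-index Mittag-Leffler function E^{(n)}_{(alpha_i),(mu_i)}(z), n = length of the lists.\<close>
definition multi_ML :: "real list \<Rightarrow> real list \<Rightarrow> real \<Rightarrow> real" where
  "multi_ML as mus z =
     (\<Sum>k. z ^ k / prod_list (map2 (\<lambda>a \<mu>. Gamma (a * real k + \<mu>)) as mus))"

text \<open>The claimed solution, as a function of s = c^2 t^2 - sum_j x_j^2 (= w^2).\<close>
definition KG_term :: "nat \<Rightarrow> real \<Rightarrow> real \<Rightarrow> real \<Rightarrow> real \<Rightarrow> nat \<Rightarrow> real" where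
  "KG_term N \<alpha> lam c s k =
     (lam / (2 powr \<alpha> * c powr \<alpha>)) ^ (2 * k) * (-1) ^ k * s powr (\<alpha> * real k + \<alpha> - 1)
     / (Gamma (\<alpha> * real k + \<alpha> + (real N - 1) / 2) * Gamma (\<alpha> * real k + \<alpha>))"

definition KG_sol :: "nat \<Rightarrow> real \<Rightarrow> real \<Rightarrow> real \<Rightarrow> real \<Rightarrow> real" where
  "KG_sol N \<alpha> lam c s = (\<Sum>k. KG_term N \<alpha> lam c s k)"

end

theory Submission
  imports Defs
begin


lemma beta_int:
  fixes x p \<beta> :: real
  assumes x: "x > 0" and p: "p > 0" and b: "\<beta> > 0"
  shows "((\<lambda>u. (x powr 2 - u powr 2) powr (\<beta> - 1) * u powr (2*p - 1) * 2)
           has_integral x powr (2*p + 2*\<beta> - 2) * Beta p \<beta>) {0..x}"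
proof -
  define f where "f = (\<lambda>t::real. t powr (p - 1) * (1 - t) powr (\<beta> - 1))"
  define g where "g u = (u/x)^2" for u :: real
  define g' where "g' u = 2*u/x^2" for u :: real
  have int: "set_integrable lborel {g 0..g x} f"
    using integrable_Beta[OF p b] x by (simp add: f_def g_def)
  have dg: "(g has_real_derivative g' u) (at u)" for u
    unfolding g_def g'_def using x by (auto intro!: derivative_eq_intros simp: power2_eq_square field_simps)
  have cg: "continuous_on {0..x} g'" unfolding g'_def using x by (intro continuous_intros) auto
  have nn: "u \<in> {0..x} \<Longrightarrow> g' u \<ge> 0" for u using x by (auto simp: g'_def)
  note S = integral_substitution[OF int dg cg nn less_imp_le[OF x]]
  have si: "set_integrable lborel {0..x} (\<lambda>u. f (g u) * g' u)" using S(1) x by simp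
  have "(LBINT t. f t * indicator {g 0..g x} t) = (LBINT u. f (g u) * g' u * indicator {0..x} u)"
    using S(2) x by simp
  hence eq: "(LINT t:{0..1}|lborel. f t) = (LINT u:{0..x}|lborel. f (g u) * g' u)"
    using x by (simp add: set_lebesgue_integral_def g_def mult.commute)
  have "(LINT t:{0..1}|lborel. f t) = Beta p \<beta>"
    using set_borel_integral_eq_integral(2)[OF integrable_Beta[OF p b]]
      integral_unique[OF has_integral_Beta_real[OF p b]] by (simp add: f_def)
  moreover have "(LINT u:{0..x}|lborel. f (g u) * g' u) = integral {0..x} (\<lambda>u. f (g u) * g' u)"
    by (rule set_borel_integral_eq_integral(2)[OF si])
  ultimately have h1: "((\<lambda>u. f (g u) * g' u) has_integral Beta p \<beta>) {0..x}"
    using set_borel_integral_eq_integral(1)[OF si] eq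
    by (metis has_integral_integral)
  have h2: "((\<lambda>u. x powr (2*p + 2*\<beta> - 2) * (f (g u) * g' u)) has_integral x powr (2*p + 2*\<beta> - 2) * Beta p \<beta>) {0..x}"
    using has_integral_mult_right[OF h1] by simp
  show ?thesis
  proof (rule has_integral_spike_finite[OF _ _ h2, of "{0,x}"])
    show "finite {0,x}" by simp
    fix u assume u: "u \<in> {0..x} - {0,x}"
    hence u0: "0 < u" "u < x" by auto
    have sq: "\<And>y::real. y > 0 \<Longrightarrow> y^2 = y powr 2"
      by (simp add: powr_numeral)
    have ha: "((u/x)^2) powr (p-1) = u powr (2*p-2) / x powr (2*p-2)"
    proof -
      have "((u/x)^2) powr (p-1) = ((u/x) powr 2) powr (p-1)" using u0 x sq[of "u/x"] by simp
      also have "\<dots> = (u/x) powr (2*p-2)" by (simp add: powr_powr algebra_simps)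
      also have "\<dots> = u powr (2*p-2) / x powr (2*p-2)" using u0 x by (simp add: powr_divide)
      finally show ?thesis .
    qed
    have hb: "((1-(u/x)^2)) powr (\<beta>-1) = (x powr 2 - u powr 2) powr (\<beta>-1) / x powr (2*\<beta>-2)"
    proof -
      have "1-(u/x)^2 = (x powr 2 - u powr 2) / x powr 2"
        using u0 x sq[of u] sq[of x] by (simp add: field_simps)
      moreover have "x powr 2 - u powr 2 \<ge> 0"
        using u0 x sq[of u] sq[of x] by (metis diff_ge_0_iff_ge less_imp_le power_mono)
      ultimately have "((1-(u/x)^2)) powr (\<beta>-1) = (x powr 2 - u powr 2) powr (\<beta>-1) / (x powr 2) powr (\<beta>-1)"
        by (simp add: powr_divide)
      also have "(x powr 2) powr (\<beta>-1) = x powr (2*\<beta>-2)" by (simp add: powr_powr algebra_simps)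
      finally show ?thesis .
    qed
    have hc: "u powr (2*p-1) = u powr (2*p-2) * u"
      using u0 powr_add[of u "2*p-2" 1] by simp
    have hd: "x powr (2*p+2*\<beta>-2) = x powr (2*p-2) * x powr (2*\<beta>-2) * x^2"
    proof -
      have "x powr (2*p+2*\<beta>-2) = x powr ((2*p-2)+(2*\<beta>-2)+2)"
        by (rule arg_cong[where f="\<lambda>e. x powr e"]) simp
      also have "\<dots> = x powr (2*p-2) * x powr (2*\<beta>-2) * x powr 2" by (simp only: powr_add)
      finally show ?thesis using x by simp
    qed
    show "(x powr 2 - u powr 2) powr (\<beta> - 1) * u powr (2*p - 1) * 2 = x powr (2*p + 2*\<beta> - 2) * (f (g u) * g' u)"
      unfolding f_def g_def g'_def ha hb hc hd using u0 x by (simp add: field_simps)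
  qed
qed


lemma Beta_pos: "p > 0 \<Longrightarrow> \<beta> > 0 \<Longrightarrow> Beta p \<beta> > (0::real)"
  unfolding Beta_def by simp

lemma Beta_mono:
  fixes p p0 \<beta> :: real
  assumes "0 < p0" "p0 \<le> p" "0 < \<beta>"
  shows "Beta p \<beta> \<le> Beta p0 \<beta>"
proof (rule has_integral_le[OF has_integral_Beta_real has_integral_Beta_real])
  fix t :: real assume t: "t \<in> {0..1}"
  show "t powr (p - 1) * (1 - t) powr (\<beta> - 1) \<le> t powr (p0 - 1) * (1 - t) powr (\<beta> - 1)"
    using t assms by (intro mult_right_mono powr_mono') auto
qed (use assms in auto)

lemma Beta_lim:
  fixes a y0 \<beta> :: real
  assumes a: "a > 0" and y0: "y0 > 0" and b: "\<beta> > 0"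
  shows "(\<lambda>k. Beta (a * real k + y0) \<beta>) \<longlonglongrightarrow> 0"
proof -
  define f where "f k t = t powr (a * real k + y0 - 1) * (1 - t) powr (\<beta> - 1)" for k t
  have fi: "(f k has_integral Beta (a * real k + y0) \<beta>) {0..1}" for k
    unfolding f_def using a y0 b by (intro has_integral_Beta_real) (auto intro: add_nonneg_pos)
  have hi: "(\<lambda>t. t powr (y0 - 1) * (1 - t) powr (\<beta> - 1)) integrable_on {0..1}"
    using integrable_Beta'[OF y0 b] .
  have le: "norm (f k t) \<le> t powr (y0 - 1) * (1 - t) powr (\<beta> - 1)" if "t \<in> {0..1}" for k t
  proof -
    have "0 \<le> f k t" using that by (simp add: f_def)
    moreover have "f k t \<le> t powr (y0 - 1) * (1 - t) powr (\<beta> - 1)"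
      unfolding f_def using that a by (intro mult_right_mono powr_mono') auto
    ultimately show ?thesis by simp
  qed
  have conv: "(\<lambda>k. f k t) \<longlonglongrightarrow> 0" if "t \<in> {0..1}" for t
  proof (cases "t = 1 \<or> t = 0")
    case True thus ?thesis by (auto simp: f_def)
  next
    case False
    hence t: "0 < t" "t < 1" using that by auto
    have eq: "f k t = (t powr (y0 - 1) * (1 - t) powr (\<beta> - 1)) * (t powr a) ^ k" for k
    proof -
      have "t powr (a * real k + y0 - 1) = t powr (y0 - 1) * t powr (a * real k)"
        using t by (simp add: powr_add[symmetric] algebra_simps)
      also have "t powr (a * real k) = (t powr a) ^ k"
        using t by (simp add: powr_powr[symmetric] powr_realpow)
      finally show ?thesis by (simp add: f_def)
    qed
    have "t powr a < 1" using powr_less_mono2[of a t 1] t a by simp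
    hence "(\<lambda>k. (t powr a) ^ k) \<longlonglongrightarrow> 0" using t by (intro LIMSEQ_realpow_zero) auto
    hence "(\<lambda>k. (t powr (y0 - 1) * (1 - t) powr (\<beta> - 1)) * (t powr a) ^ k) \<longlonglongrightarrow> 0"
      by (intro tendsto_mult_right_zero)
    thus ?thesis by (simp add: eq)
  qed
  have "(\<lambda>k. integral {0..1} (f k)) \<longlonglongrightarrow> integral {0..1} (\<lambda>t::real. 0::real)"
    apply (rule dominated_convergence(2)[where f=f and g="\<lambda>t. 0" and h="\<lambda>t. t powr (y0 - 1) * (1 - t) powr (\<beta> - 1)"])
    using fi hi le conv by (auto simp: integrable_on_def)
  moreover have "integral {0..1} (f k) = Beta (a * real k + y0) \<beta>" for k
    using fi[of k] by (rule integral_unique)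
  ultimately show ?thesis by simp
qed


definition inC :: "real \<Rightarrow> real \<Rightarrow> (nat \<Rightarrow> real) \<Rightarrow> (real \<Rightarrow> real) \<Rightarrow> bool" where
  "inC a b c f \<longleftrightarrow> (\<forall>z. summable (\<lambda>n. c n * z^n)) \<and>
     (\<forall>u>0. f u = u powr (2*b) * (\<Sum>n. c n * (u powr (2*a))^n))"

lemma inC_lin:
  assumes "inC a b c f" "inC a b d g"
  shows "inC a b (\<lambda>k. p * c k + q * d k) (\<lambda>u. p * f u + q * g u)"
proof -
  have sc: "summable (\<lambda>n. c n * z^n)" and sd: "summable (\<lambda>n. d n * z^n)" for z
    using assms unfolding inC_def by auto
  have s: "(\<lambda>n. (p * c n + q * d n) * z^n) sums (p * (\<Sum>n. c n * z^n) + q * (\<Sum>n. d n * z^n))" for z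
  proof -
    have "(\<lambda>n. p * (c n * z^n) + q * (d n * z^n)) sums (p * (\<Sum>n. c n * z^n) + q * (\<Sum>n. d n * z^n))"
      by (intro sums_add sums_mult summable_sums sc sd)
    thus ?thesis by (simp add: algebra_simps)
  qed
  show ?thesis unfolding inC_def
  proof (intro conjI allI impI)
    fix z show "summable (\<lambda>n. (p * c n + q * d n) * z^n)" using s by (rule sums_summable)
  next
    fix u :: real assume u: "u > 0"
    have "p * f u + q * g u = u powr (2*b) * (p * (\<Sum>n. c n * (u powr (2*a))^n) + q * (\<Sum>n. d n * (u powr (2*a))^n))"
      using assms u unfolding inC_def by (simp add: algebra_simps)
    also have "\<dots> = u powr (2*b) * (\<Sum>n. (p * c n + q * d n) * (u powr (2*a))^n)"
      using sums_unique[OF s[of "u powr (2*a)"]] by simp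
    finally show "p * f u + q * g u = u powr (2*b) * (\<Sum>n. (p * c n + q * d n) * (u powr (2*a))^n)" .
  qed
qed

lemma mul_powr_m1: "u > 0 \<Longrightarrow> u * u powr (r - 1) = u powr (r::real)"
  using powr_add[of u 1 "r - 1"] by simp

lemma inC_deriv:
  assumes "inC a b c f"
  shows "inC a b (\<lambda>k. c k * (2*b + 2*a*real k)) (\<lambda>u. u * deriv f u)"
proof -
  have sc: "\<And>z. summable (\<lambda>n. c n * z^n)" using assms unfolding inC_def by auto
  define P where "P z = (\<Sum>n. c n * z^n)" for z :: real
  define P' where "P' z = (\<Sum>n. diffs c n * z^n)" for z :: real
  have dP: "(P has_real_derivative P' z) (at z)" for z
    unfolding P_def P'_def by (rule termdiffs_strong_converges_everywhere[OF sc])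
  have s: "(\<lambda>n. c n * (2*b + 2*a*real n) * z^n) sums (2*b * P z + 2*a * (z * P' z))" for z
  proof -
    have "(\<lambda>n. diffs c n * z^n) sums P' z"
      unfolding P'_def by (intro summable_sums termdiff_converges_all sc)
    hence "(\<lambda>n. z * (diffs c n * z^n)) sums (z * P' z)" by (rule sums_mult)
    hence "(\<lambda>n. (\<lambda>n. real n * c n * z^n) (Suc n)) sums (z * P' z)"
      by (simp add: diffs_def algebra_simps)
    hence "(\<lambda>n. real n * c n * z^n) sums (z * P' z + (\<lambda>n. real n * c n * z^n) 0)"
      by (rule iffD1[OF sums_Suc_iff[of "\<lambda>n. real n * c n * z^n"]])
    hence g: "(\<lambda>n. real n * c n * z^n) sums (z * P' z)" by simp
    have "(\<lambda>n. 2*b * (c n * z^n) + 2*a * (real n * c n * z^n)) sums (2*b * P z + 2*a * (z * P' z))"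
      unfolding P_def by (intro sums_add sums_mult g summable_sums sc)
    thus ?thesis by (simp add: algebra_simps)
  qed
  show ?thesis unfolding inC_def
  proof (intro conjI allI impI)
    fix z show "summable (\<lambda>n. c n * (2*b + 2*a*real n) * z^n)" using s by (rule sums_summable)
  next
    fix u :: real assume u: "u > 0"
    define h where "h v = v powr (2*b) * P (v powr (2*a))" for v
    have d1: "((\<lambda>v. v powr (2*b)) has_real_derivative (2*b * u powr (2*b-1))) (at u)"
      by (rule has_real_derivative_powr[OF u])
    have d2: "((\<lambda>v. v powr (2*a)) has_real_derivative (2*a * u powr (2*a-1))) (at u)"
      by (rule has_real_derivative_powr[OF u])
    have d3: "((\<lambda>v. P (v powr (2*a))) has_real_derivative P' (u powr (2*a)) * (2*a * u powr (2*a-1))) (at u)"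
      by (rule DERIV_chain2[OF dP d2])
    have dh: "(h has_real_derivative (2*b * u powr (2*b-1)) * P (u powr (2*a)) + P' (u powr (2*a)) * (2*a * u powr (2*a-1)) * u powr (2*b)) (at u)"
      unfolding h_def by (rule DERIV_mult[OF d1 d3])
    have df: "(f has_real_derivative (2*b * u powr (2*b-1)) * P (u powr (2*a)) + P' (u powr (2*a)) * (2*a * u powr (2*a-1)) * u powr (2*b)) (at u)"
      by (rule has_field_derivative_transform_within_open[OF dh, of "{0<..}"])
         (use u assms in \<open>auto simp: inC_def h_def P_def\<close>)
    have "u * deriv f u = u * ((2*b * u powr (2*b-1)) * P (u powr (2*a)) + P' (u powr (2*a)) * (2*a * u powr (2*a-1)) * u powr (2*b))"
      using DERIV_imp_deriv[OF df] by simp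
    also have "\<dots> = 2*b * (u * u powr (2*b-1)) * P (u powr (2*a)) + 2*a * ((u * u powr (2*a-1)) * P' (u powr (2*a))) * u powr (2*b)"
      by (simp add: algebra_simps)
    also have "\<dots> = u powr (2*b) * (2*b * P (u powr (2*a)) + 2*a * (u powr (2*a) * P' (u powr (2*a))))"
      using u by (simp add: mul_powr_m1 algebra_simps)
    also have "\<dots> = u powr (2*b) * (\<Sum>n. c n * (2*b + 2*a*real n) * (u powr (2*a))^n)"
      using sums_unique[OF s[of "u powr (2*a)"]] by simp
    finally show "u * deriv f u = u powr (2*b) * (\<Sum>n. c n * (2*b + 2*a*real n) * (u powr (2*a))^n)" .
  qed
qed


lemma powr_pow: "u > 0 \<Longrightarrow> (u powr r)^k = u powr (r * real k)"
  by (simp add: powr_powr[symmetric] powr_realpow)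

lemma inC_EKpos:
  assumes f: "inC a b c f" and a: "a > 0" and eb: "\<eta> + b + 1 > 0" and be: "\<beta> > 0"
  shows "inC a b (\<lambda>k. c k * Beta (\<eta> + b + a * real k + 1) \<beta> / Gamma \<beta>) (EK_pos 2 \<eta> \<beta> f)"
proof -
  have sc: "\<And>z. summable (\<lambda>n. c n * z^n)" using f unfolding inC_def by auto
  have fu: "\<And>u. u > 0 \<Longrightarrow> f u = u powr (2*b) * (\<Sum>n. c n * (u powr (2*a))^n)"
    using f unfolding inC_def by auto
  define p where "p k = \<eta> + b + a * real k + 1" for k
  have pp: "p k > 0" for k using eb a unfolding p_def by (smt (verit) of_nat_0_le_iff mult_nonneg_nonneg)
  have pp0: "p 0 \<le> p k" for k using a unfolding p_def by simp
  define B where "B k = Beta (p k) \<beta>" for k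
  have Bpos: "B k > 0" for k unfolding B_def using Beta_pos pp be by blast
  have Ble: "B k \<le> B 0" for k unfolding B_def using Beta_mono pp pp0 be by blast
  have Gpos: "Gamma \<beta> > 0" using be by simp
  define d where "d k = c k * B k / Gamma \<beta>" for k
  have sa: "summable (\<lambda>n. norm (c n * z^n))" for z
    by (rule powser_insidea[OF sc[of "\<bar>z\<bar> + 1"]]) simp
  have sd: "summable (\<lambda>n. d n * z^n)" for z
  proof (rule summable_comparison_test)
    show "\<exists>N. \<forall>n\<ge>N. norm (d n * z^n) \<le> B 0 / Gamma \<beta> * norm (c n * z^n)"
    proof (intro exI allI impI)
      fix n :: nat
      have "norm (d n * z^n) = B n / Gamma \<beta> * norm (c n * z^n)"
        unfolding d_def using Bpos[of n] Gpos by (simp add: abs_mult)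
      also have "\<dots> \<le> B 0 / Gamma \<beta> * norm (c n * z^n)"
        using Ble[of n] Gpos by (intro mult_right_mono divide_right_mono) auto
      finally show "norm (d n * z^n) \<le> B 0 / Gamma \<beta> * norm (c n * z^n)" .
    qed
    show "summable (\<lambda>n. B 0 / Gamma \<beta> * norm (c n * z^n))" by (intro summable_mult sa)
  qed
  have main: "EK_pos 2 \<eta> \<beta> f x = x powr (2*b) * (\<Sum>n. d n * (x powr (2*a))^n)" if x: "x > 0" for x
  proof -
    define X where "X = x powr (2*a)"
    have X0: "X > 0" unfolding X_def using x by simp
    define A where "A u = (x powr 2 - u powr 2) powr (\<beta> - 1)" for u
    define K where "K u = A u * u powr (2*(\<eta>+b+1) - 1) * 2" for u
    define F where "F u = (x powr 2 - u powr 2) powr (\<beta> - 1) * u powr (2 * \<eta>) * f u * (2 * u powr (2 - 1))" for u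
    have EKF: "EK_pos 2 \<eta> \<beta> f x = x powr (- 2 * \<eta> - 2 * \<beta>) / Gamma \<beta> * integral {0..x} F"
      unfolding EK_pos_def F_def by simp
    define T where "T k u = c k * ((x powr 2 - u powr 2) powr (\<beta> - 1) * u powr (2 * p k - 1) * 2)" for k u
    have Ti: "(T k has_integral c k * (x powr (2 * p k + 2*\<beta> - 2) * B k)) {0..x}" for k
      unfolding T_def B_def by (intro has_integral_mult_right beta_int x pp be)
    define S where "S n u = (\<Sum>k<n. T k u)" for n u
    have Si: "(S n has_integral (\<Sum>k<n. c k * (x powr (2 * p k + 2*\<beta> - 2) * B k))) {0..x}" for n
      unfolding S_def[abs_def] by (intro has_integral_sum Ti) auto
    have Ki: "K integrable_on {0..x}"
      using beta_int[OF x _ be, of "\<eta>+b+1"] eb unfolding K_def A_def by (auto simp: integrable_on_def)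
    define Q where "Q = (\<Sum>n. norm (c n * X^n))"
    have Knn: "K u \<ge> 0" for u unfolding K_def A_def by simp
    have Tu: "T k u = K u * (c k * (u powr (2*a))^k)" if "u > 0" for k u
    proof -
      have "u powr (2 * p k - 1) = u powr (2*(\<eta>+b+1) - 1) * (u powr (2*a))^k"
        using that by (simp add: powr_pow p_def powr_add[symmetric] algebra_simps)
      thus ?thesis unfolding T_def K_def A_def by simp
    qed
    have Fu: "F u = K u * (\<Sum>n. c n * (u powr (2*a))^n)" if "u > 0" for u
    proof -
      have "u powr (2 * \<eta>) * u powr (2*b) * u = u powr (2*(\<eta>+b+1) - 1)"
        using that powr_add[of u "2*\<eta>+2*b" 1] by (simp add: powr_add[symmetric] algebra_simps)
      thus ?thesis unfolding F_def K_def A_def using fu[OF that] that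
        by (simp add: algebra_simps)
    qed
    have le: "norm (S n u) \<le> Q * K u" if u: "u \<in> {0..x}" for n u
    proof (cases "u = 0")
      case True thus ?thesis using Knn[of u] sa[of X] 
        by (simp add: S_def T_def Q_def suminf_nonneg)
    next
      case False
      hence u0: "u > 0" using u by auto
      have "norm (S n u) = K u * norm (\<Sum>k<n. c k * (u powr (2*a))^k)"
        unfolding S_def using Tu[OF u0] Knn[of u] by (simp add: sum_distrib_left[symmetric] abs_mult)
      also have "\<dots> \<le> K u * Q"
      proof (intro mult_left_mono Knn)
        have "norm (\<Sum>k<n. c k * (u powr (2*a))^k) \<le> (\<Sum>k<n. norm (c k * (u powr (2*a))^k))"
          by (rule norm_sum)
        also have "\<dots> \<le> (\<Sum>k<n. norm (c k * X^k))"
        proof (intro sum_mono)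
          fix k
          have "u powr (2*a) \<le> X" unfolding X_def using u0 u a by (intro powr_mono2) auto
          hence "(u powr (2*a))^k \<le> X^k" by (intro power_mono) auto
          thus "norm (c k * (u powr (2*a))^k) \<le> norm (c k * X^k)"
            by (simp add: abs_mult mult_left_mono)
        qed
        also have "\<dots> \<le> Q" unfolding Q_def by (intro sum_le_suminf sa) auto
        finally show "norm (\<Sum>k<n. c k * (u powr (2*a))^k) \<le> Q" .
      qed
      finally show ?thesis by (simp add: mult.commute)
    qed
    have conv: "(\<lambda>n. S n u) \<longlonglongrightarrow> F u" if u: "u \<in> {0..x}" for u
    proof (cases "u = 0")
      case True thus ?thesis by (simp add: S_def T_def F_def)
    next
      case False
      hence u0: "u > 0" using u by auto
      have "(\<lambda>n. K u * (\<Sum>k<n. c k * (u powr (2*a))^k)) \<longlonglongrightarrow> K u * (\<Sum>n. c n * (u powr (2*a))^n)"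
        by (intro tendsto_mult_left summable_LIMSEQ sc)
      thus ?thesis unfolding S_def using Tu[OF u0] Fu[OF u0] by (simp add: sum_distrib_left)
    qed
    have DC: "(\<lambda>n. integral {0..x} (S n)) \<longlonglongrightarrow> integral {0..x} F"
      apply (rule dominated_convergence(2)[where f=S and g=F and h="\<lambda>u. Q * K u"])
      using Si le conv integrable_on_cmult_left[OF Ki, of Q] by (auto simp: integrable_on_def)
    hence "(\<lambda>k. c k * (x powr (2 * p k + 2*\<beta> - 2) * B k)) sums integral {0..x} F"
    proof -
      have "integral {0..x} (S n) = (\<Sum>k<n. c k * (x powr (2 * p k + 2*\<beta> - 2) * B k))" for n
        using Si[of n] by (rule integral_unique)
      thus ?thesis using DC unfolding sums_def by simp
    qed
    hence "(\<lambda>k. x powr (- 2 * \<eta> - 2 * \<beta>) / Gamma \<beta> * (c k * (x powr (2 * p k + 2*\<beta> - 2) * B k)))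
             sums EK_pos 2 \<eta> \<beta> f x"
      unfolding EKF by (rule sums_mult)
    moreover have "x powr (- 2 * \<eta> - 2 * \<beta>) / Gamma \<beta> * (c k * (x powr (2 * p k + 2*\<beta> - 2) * B k))
                 = x powr (2*b) * (d k * X^k)" for k
    proof -
      have "x powr (- 2 * \<eta> - 2 * \<beta>) * x powr (2 * p k + 2*\<beta> - 2) = x powr (2*b) * X^k"
        unfolding X_def using x by (simp add: powr_pow p_def powr_add[symmetric] algebra_simps)
      thus ?thesis unfolding d_def by (simp add: algebra_simps)
    qed
    ultimately have "(\<lambda>k. x powr (2*b) * (d k * X^k)) sums EK_pos 2 \<eta> \<beta> f x" by simp
    moreover have "(\<lambda>k. x powr (2*b) * (d k * X^k)) sums (x powr (2*b) * (\<Sum>n. d n * X^n))"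
      by (intro sums_mult summable_sums sd)
    ultimately show ?thesis unfolding X_def using sums_unique2 by blast
  qed
  show ?thesis unfolding inC_def using sd main by (simp add: d_def B_def p_def)
qed


lemma inC_cong: "inC a b c f \<Longrightarrow> (\<And>k. c k = d k) \<Longrightarrow> inC a b d f"
  by (simp add: inC_def)

lemma Gamma_plus1_real: "(y::real) > 0 \<Longrightarrow> Gamma (y + 1) = y * Gamma y"
  by (rule Gamma_plus1) (auto elim!: nonpos_Ints_cases)

lemma Gamma_ratio_step:
  fixes y :: real assumes "y \<ge> 0"
  shows "y * (p / Gamma (y + 1)) = p / Gamma y"
proof (cases "y = 0")
  case True thus ?thesis by simp
next
  case False hence "y > 0" using assms by simp
  thus ?thesis using Gamma_plus1_real[of y] Gamma_real_pos[of y] by (simp add: field_simps)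
qed

lemma inC_EKrec1:
  assumes f: "inC a b c f" and a: "a > 0" and eb: "\<eta> + b + 1 > 0" and al: "\<alpha>' + 1 > 0"
  shows "inC a b (\<lambda>k. (\<eta> + \<alpha>' + 1) * (c k * Beta (\<eta> + b + a * real k + 1) (\<alpha>' + 1) / Gamma (\<alpha>' + 1))
           + 1/2 * (c k * (2*b + 2*a*real k) * Beta (\<eta> + b + a * real k + 1) (\<alpha>' + 1) / Gamma (\<alpha>' + 1)))
         (EK_rec (Suc 0) 2 \<eta> \<alpha>' f)"
proof -
  have e: "EK_rec (Suc 0) 2 \<eta> \<alpha>' f = (\<lambda>x. (\<eta> + \<alpha>' + 1) * EK_pos 2 \<eta> (\<alpha>' + 1) f x
              + 1/2 * EK_pos 2 \<eta> (\<alpha>' + 1) (\<lambda>u. u * deriv f u) x)"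
    by (rule ext) simp
  show ?thesis unfolding e
    by (rule inC_lin[OF inC_EKpos[OF f a eb al] inC_EKpos[OF inC_deriv[OF f] a eb al]])
qed

lemma floor_one_real: "0 < (\<alpha>::real) \<Longrightarrow> \<alpha> < 1 \<Longrightarrow> \<lfloor>\<alpha>\<rfloor> = 0"
  by (simp add: floor_eq_iff)

lemma inC_EK_neg:
  assumes f: "inC a b c f" and a: "a > 0" and al: "0 < \<alpha>" "\<alpha> \<le> 1" and eb: "\<eta> + b + 1 - \<alpha> \<ge> 0"
  shows "inC a b (\<lambda>k. c k * (Gamma (\<eta> + b + a * real k + 1) / Gamma (\<eta> + b + a * real k + 1 - \<alpha>)))
           (EK 2 \<eta> (-\<alpha>) f)"
proof (cases "\<alpha> < 1")
  case True
  have e: "EK 2 \<eta> (-\<alpha>) f = EK_rec (Suc 0) 2 \<eta> (-\<alpha>) f"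
    using al True floor_one_real[of \<alpha>] by (intro ext) (simp add: EK_def)
  have eb': "\<eta> + b + 1 > 0" using eb al by simp
  show ?thesis unfolding e
  proof (rule inC_cong[OF inC_EKrec1[OF f a eb']])
    show "- \<alpha> + 1 > 0" using True by simp
  next
    fix k
    define p where "p = \<eta> + b + a * real k + 1"
    have y: "p - \<alpha> \<ge> 0" using eb a unfolding p_def by (smt (verit) of_nat_0_le_iff mult_nonneg_nonneg)
    have G: "Gamma (1 - \<alpha>) > 0" using True by simp
    define R where "R = Gamma p / Gamma (p - \<alpha> + 1)"
    have BR: "Beta p (- \<alpha> + 1) = R * Gamma (- \<alpha> + 1)"
      unfolding Beta_def R_def by (simp add: algebra_simps)
    have "(\<eta> + - \<alpha> + 1) * (c k * Beta p (- \<alpha> + 1) / Gamma (- \<alpha> + 1))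
           + 1/2 * (c k * (2*b + 2*a*real k) * Beta p (- \<alpha> + 1) / Gamma (- \<alpha> + 1))
         = (\<eta> + - \<alpha> + 1) * (c k * R) + 1/2 * (c k * (2*b + 2*a*real k) * R)"
      unfolding BR using G by simp
    also have "\<dots> = c k * ((p - \<alpha>) * R)"
      unfolding p_def by (simp add: algebra_simps)
    also have "\<dots> = c k * (Gamma p / Gamma (p - \<alpha>))"
      using Gamma_ratio_step[OF y, of "Gamma p"] unfolding R_def by simp
    finally show "(\<eta> + - \<alpha> + 1) * (c k * Beta (\<eta> + b + a * real k + 1) (- \<alpha> + 1) / Gamma (- \<alpha> + 1))
           + 1/2 * (c k * (2*b + 2*a*real k) * Beta (\<eta> + b + a * real k + 1) (- \<alpha> + 1) / Gamma (- \<alpha> + 1))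
         = c k * (Gamma (\<eta> + b + a * real k + 1) / Gamma (\<eta> + b + a * real k + 1 - \<alpha>))"
      unfolding p_def .
  qed
next
  case False
  hence a1: "\<alpha> = 1" using al by simp
  have e: "EK 2 \<eta> (-\<alpha>) f = (\<lambda>x. \<eta> * EK_rec (Suc 0) 2 \<eta> 0 f x + 1/2 * EK_rec (Suc 0) 2 \<eta> 0 (\<lambda>u. u * deriv f u) x)"
    unfolding a1 by (intro ext) (simp add: EK_def del: EK_rec.simps(2) add: EK_rec.simps(2)[of "Suc 0"])
  have eb': "\<eta> + b + 1 > 0" using eb al a1 a by simp
  have p0: "\<eta> + b + a * real k + 1 > 0" for k using eb' a by (smt (verit) of_nat_0_le_iff mult_nonneg_nonneg)
  have R: "inC a b c (EK_rec (Suc 0) 2 \<eta> 0 f)"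
  proof (rule inC_cong[OF inC_EKrec1[OF f a eb', of 0]])
    fix k
    define p where "p = \<eta> + b + a * real k + 1"
    have pp: "p > 0" using p0 unfolding p_def by simp
    have gn: "Gamma p \<noteq> 0" using Gamma_real_pos[OF pp] by linarith
    have "Beta p 1 = 1 / p" unfolding Beta_def using Gamma_plus1_real[OF pp] pp gn
      by (simp add: field_simps)
    hence B1: "Beta p (0+1) = 1 / p" by simp
    have eta: "\<eta> = p - 1 - b - a * real k" unfolding p_def by simp
    have "(\<eta> + 0 + 1) * (c k * Beta p (0 + 1) / Gamma (0 + 1))
           + 1/2 * (c k * (2*b + 2*a*real k) * Beta p (0 + 1) / Gamma (0 + 1)) = c k"
      unfolding B1 using pp by (simp add: field_simps eta)
    thus "(\<eta> + 0 + 1) * (c k * Beta (\<eta> + b + a * real k + 1) (0 + 1) / Gamma (0 + 1))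
           + 1/2 * (c k * (2*b + 2*a*real k) * Beta (\<eta> + b + a * real k + 1) (0 + 1) / Gamma (0 + 1)) = c k"
      unfolding p_def .
  qed simp
  have RD: "inC a b (\<lambda>k. c k * (2*b + 2*a*real k)) (EK_rec (Suc 0) 2 \<eta> 0 (\<lambda>u. u * deriv f u))"
  proof (rule inC_cong[OF inC_EKrec1[OF inC_deriv[OF f] a eb', of 0]])
    fix k
    define p where "p = \<eta> + b + a * real k + 1"
    have pp: "p > 0" using p0 unfolding p_def by simp
    have gn: "Gamma p \<noteq> 0" using Gamma_real_pos[OF pp] by linarith
    have "Beta p 1 = 1 / p" unfolding Beta_def using Gamma_plus1_real[OF pp] pp gn
      by (simp add: field_simps)
    hence B1: "Beta p (0+1) = 1 / p" by simp
    have eta: "\<eta> = p - 1 - b - a * real k" unfolding p_def by simp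
    have "(\<eta> + 0 + 1) * (c k * (2*b + 2*a*real k) * Beta p (0 + 1) / Gamma (0 + 1))
           + 1/2 * (c k * (2*b + 2*a*real k) * (2*b + 2*a*real k) * Beta p (0 + 1) / Gamma (0 + 1))
          = c k * (2*b + 2*a*real k)"
      unfolding B1 using pp by (simp add: field_simps eta)
    thus "(\<eta> + 0 + 1) * (c k * (2*b + 2*a*real k) * Beta (\<eta> + b + a * real k + 1) (0 + 1) / Gamma (0 + 1))
           + 1/2 * (c k * (2*b + 2*a*real k) * (2*b + 2*a*real k) * Beta (\<eta> + b + a * real k + 1) (0 + 1) / Gamma (0 + 1))
          = c k * (2*b + 2*a*real k)"
      unfolding p_def .
  qed simp
  show ?thesis unfolding e
  proof (rule inC_cong[OF inC_lin[OF R RD]])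
    fix k
    define y where "y = \<eta> + b + a * real k"
    have y: "y \<ge> 0" using eb a a1 unfolding y_def by (smt (verit) of_nat_0_le_iff mult_nonneg_nonneg)
    have "\<eta> * c k + 1/2 * (c k * (2*b + 2*a*real k)) = c k * (y * (Gamma (y+1) / Gamma (y + 1)))"
    proof -
      have "Gamma (y+1) \<noteq> 0" using Gamma_real_pos[of "y+1"] y by linarith
      thus ?thesis unfolding y_def by (simp add: field_simps)
    qed
    also have "\<dots> = c k * (Gamma (y+1) / Gamma y)" using Gamma_ratio_step[OF y, of "Gamma (y+1)"] by simp
    finally show "\<eta> * c k + 1/2 * (c k * (2*b + 2*a*real k))
        = c k * (Gamma (\<eta> + b + a * real k + 1) / Gamma (\<eta> + b + a * real k + 1 - \<alpha>))"
      unfolding y_def a1 by (simp add: add.assoc)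
  qed
qed


lemma ratio_entire:
  fixes \<alpha> \<eta> M :: real
  assumes al: "\<alpha> > 0" and et: "\<eta> \<ge> 0"
  shows "summable (\<lambda>k. M^k / (Gamma (\<alpha> * real k + \<alpha> + \<eta>) * Gamma (\<alpha> * real k + \<alpha>)))"
proof -
  define t where "t k = M^k / (Gamma (\<alpha> * real k + \<alpha> + \<eta>) * Gamma (\<alpha> * real k + \<alpha>))" for k
  define B1 where "B1 k = Beta (\<alpha> * real k + (\<alpha> + \<eta>)) \<alpha>" for k
  define B2 where "B2 k = Beta (\<alpha> * real k + \<alpha>) \<alpha>" for k
  have x1: "\<alpha> * real k + \<alpha> + \<eta> > 0" for k using al et by (smt (verit) of_nat_0_le_iff mult_nonneg_nonneg)
  have x2: "\<alpha> * real k + \<alpha> > 0" for k using al by (smt (verit) of_nat_0_le_iff mult_nonneg_nonneg)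
  have GA: "Gamma \<alpha> > 0" using al by simp
  have GA': "Gamma \<alpha> \<noteq> 0" using GA by linarith
  have step: "t (Suc k) = M * (B1 k / Gamma \<alpha>) * (B2 k / Gamma \<alpha>) * t k" for k
  proof -
    have g1: "Gamma (\<alpha> * real k + \<alpha> + \<eta>) > 0" using x1[of k] by simp
    have g2: "Gamma (\<alpha> * real k + \<alpha>) > 0" using x2[of k] by simp
    have e1: "\<alpha> * real (Suc k) + \<alpha> + \<eta> = (\<alpha> * real k + \<alpha> + \<eta>) + \<alpha>" by (simp add: algebra_simps)
    have e2: "\<alpha> * real (Suc k) + \<alpha> = (\<alpha> * real k + \<alpha>) + \<alpha>" by (simp add: algebra_simps)
    have b1: "B1 k / Gamma \<alpha> = Gamma (\<alpha> * real k + \<alpha> + \<eta>) / Gamma ((\<alpha> * real k + \<alpha> + \<eta>) + \<alpha>)"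
      unfolding B1_def Beta_def using GA' by (simp add: add.assoc)
    have b2: "B2 k / Gamma \<alpha> = Gamma (\<alpha> * real k + \<alpha>) / Gamma ((\<alpha> * real k + \<alpha>) + \<alpha>)"
      unfolding B2_def Beta_def using GA' by simp
    show ?thesis unfolding t_def e1 e2 b1 b2 using g1 g2 by (simp add: field_simps)
  qed
  have lim: "(\<lambda>k. \<bar>M\<bar> * (B1 k / Gamma \<alpha>) * (B2 k / Gamma \<alpha>)) \<longlonglongrightarrow> \<bar>M\<bar> * (0 / Gamma \<alpha>) * (0 / Gamma \<alpha>)"
    unfolding B1_def B2_def
    by (intro tendsto_intros Beta_lim al) (use al et GA' in auto)
  hence "eventually (\<lambda>k. \<bar>M\<bar> * (B1 k / Gamma \<alpha>) * (B2 k / Gamma \<alpha>) < 1/2) sequentially"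
    by (intro order_tendstoD) auto
  then obtain N where N: "\<And>k. k \<ge> N \<Longrightarrow> \<bar>M\<bar> * (B1 k / Gamma \<alpha>) * (B2 k / Gamma \<alpha>) < 1/2"
    by (auto simp: eventually_at_top_linorder)
  have Bp: "B1 k > 0" "B2 k > 0" for k unfolding B1_def B2_def
    using Beta_pos x1[of k] x2[of k] al by (auto simp: add.assoc)
  show ?thesis unfolding t_def[symmetric]
  proof (rule summable_ratio_test[of "1/2" N])
    fix k assume k: "k \<ge> N"
    have "norm (t (Suc k)) = (\<bar>M\<bar> * (B1 k / Gamma \<alpha>) * (B2 k / Gamma \<alpha>)) * norm (t k)"
      unfolding step using Bp[of k] GA by (simp add: abs_mult)
    also have "\<dots> \<le> 1/2 * norm (t k)" using N[OF k] by (intro mult_right_mono) auto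
    finally show "norm (t (Suc k)) \<le> 1/2 * norm (t k)" .
  qed simp
qed


lemma sq_powr: "(u::real) > 0 \<Longrightarrow> (u^2) powr r = u powr (2*r)"
proof -
  assume u: "u > 0"
  have "u^2 = u powr 2" using u by simp
  hence "(u^2) powr r = (u powr 2) powr r" by simp
  also have "\<dots> = u powr (2*r)" by (simp add: powr_powr)
  finally show ?thesis .
qed

theorem theorem3p2:
  fixes N :: nat and \<alpha> lam c :: real
  assumes "N \<ge> 1" and "0 < \<alpha>" and "\<alpha> \<le> 1" and "c > 0"
  shows "(\<forall>w > 0. frac_bessel_op N \<alpha> (\<lambda>v. KG_sol N \<alpha> lam c (v\<^sup>2)) w
                   = - (lam\<^sup>2 / c powr (2 * \<alpha>)) * KG_sol N \<alpha> lam c (w\<^sup>2))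
       \<and> (\<forall>(x :: nat \<Rightarrow> real) (t :: real).
             c\<^sup>2 * t\<^sup>2 - (\<Sum>j = 1..N. (x j)\<^sup>2) > 0 \<longrightarrow>
             (let s = c\<^sup>2 * t\<^sup>2 - (\<Sum>j = 1..N. (x j)\<^sup>2) in
                summable (KG_term N \<alpha> lam c s)
              \<and> KG_sol N \<alpha> lam c s
                  = s powr (\<alpha> - 1) *
                    multi_ML [\<alpha>, \<alpha>] [\<alpha>, \<alpha> + (real N - 1) / 2]
                      (- (lam * s powr (\<alpha> / 2) / (2 powr \<alpha> * c powr \<alpha>))\<^sup>2)))"
proof -
  note N = assms(1) and al = assms(2) assms(3) and cpos = assms(4)
  define \<eta>1 where "\<eta>1 = (real N - 1) / 2"
  have e1: "\<eta>1 \<ge> 0" using N unfolding \<eta>1_def by simp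
  define q where "q = lam / (2 powr \<alpha> * c powr \<alpha>)"
  define cK where "cK k = (-(q^2))^k / (Gamma (\<alpha> * real k + \<alpha> + \<eta>1) * Gamma (\<alpha> * real k + \<alpha>))" for k
  have ent: "summable (\<lambda>k. cK k * z^k)" for z
  proof -
    have "summable (\<lambda>k. (-(q^2) * z)^k / (Gamma (\<alpha> * real k + \<alpha> + \<eta>1) * Gamma (\<alpha> * real k + \<alpha>)))"
      by (rule ratio_entire[OF al(1) e1])
    moreover have "(-(q^2) * z)^k / (Gamma (\<alpha> * real k + \<alpha> + \<eta>1) * Gamma (\<alpha> * real k + \<alpha>)) = cK k * z^k" for k
      unfolding cK_def power_mult_distrib by simp
    ultimately show ?thesis by simp
  qed
  have KGt: "KG_term N \<alpha> lam c s k = s powr (\<alpha> - 1) * (cK k * (s powr \<alpha>)^k)" if s: "s > 0" for s k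
  proof -
    have "q^(2*k) * (-1)^k = (-(q^2))^k"
      using power_mult[of q 2 k] power_minus[of "q^2" k] by (simp only: mult.commute)
    moreover have "s powr (\<alpha> * real k + \<alpha> - 1) = s powr (\<alpha> - 1) * (s powr \<alpha>)^k"
      using s by (simp add: powr_pow powr_add[symmetric] algebra_simps)
    ultimately show ?thesis unfolding KG_term_def cK_def q_def[symmetric] \<eta>1_def[symmetric]
      by (simp add: field_simps)
  qed
  have KGs: "KG_sol N \<alpha> lam c s = s powr (\<alpha> - 1) * (\<Sum>k. cK k * (s powr \<alpha>)^k)"
    and KGsum: "summable (KG_term N \<alpha> lam c s)" if s: "s > 0" for s
  proof -
    have e: "KG_term N \<alpha> lam c s = (\<lambda>k. s powr (\<alpha> - 1) * (cK k * (s powr \<alpha>)^k))"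
      using KGt[OF s] by (intro ext) simp
    show "KG_sol N \<alpha> lam c s = s powr (\<alpha> - 1) * (\<Sum>k. cK k * (s powr \<alpha>)^k)"
      unfolding KG_sol_def e by (rule suminf_mult[OF ent])
    show "summable (KG_term N \<alpha> lam c s)" unfolding e by (rule summable_mult[OF ent])
  qed
  have part2: "summable (KG_term N \<alpha> lam c s)
              \<and> KG_sol N \<alpha> lam c s
                  = s powr (\<alpha> - 1) *
                    multi_ML [\<alpha>, \<alpha>] [\<alpha>, \<alpha> + (real N - 1) / 2]
                      (- (lam * s powr (\<alpha> / 2) / (2 powr \<alpha> * c powr \<alpha>))\<^sup>2)" if s: "s > 0" for s
  proof
    show "summable (KG_term N \<alpha> lam c s)" by (rule KGsum[OF s])
    have Z: "- (lam * s powr (\<alpha> / 2) / (2 powr \<alpha> * c powr \<alpha>))\<^sup>2 = -(q^2) * s powr \<alpha>"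
    proof -
      have "(s powr (\<alpha>/2))^2 = s powr \<alpha>" using s by (simp add: powr_pow)
      thus ?thesis unfolding q_def by (simp add: power_mult_distrib power_divide)
    qed
    have "multi_ML [\<alpha>, \<alpha>] [\<alpha>, \<alpha> + (real N - 1) / 2]
                      (- (lam * s powr (\<alpha> / 2) / (2 powr \<alpha> * c powr \<alpha>))\<^sup>2) = (\<Sum>k. cK k * (s powr \<alpha>)^k)"
      unfolding multi_ML_def Z power_mult_distrib cK_def \<eta>1_def
      by (rule suminf_cong) (simp add: add.assoc mult.commute)
    thus "KG_sol N \<alpha> lam c s = s powr (\<alpha> - 1) * multi_ML [\<alpha>, \<alpha>] [\<alpha>, \<alpha> + (real N - 1) / 2]
                      (- (lam * s powr (\<alpha> / 2) / (2 powr \<alpha> * c powr \<alpha>))\<^sup>2)"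
      using KGs[OF s] by simp
  qed
  show ?thesis
  proof (intro conjI allI impI)
    fix w :: real assume w: "w > 0"
    define f where "f = (\<lambda>v. KG_sol N \<alpha> lam c (v\<^sup>2))"
    have fC: "inC \<alpha> (\<alpha> - 1) cK f"
      unfolding inC_def
    proof (intro conjI allI impI)
      fix z show "summable (\<lambda>n. cK n * z^n)" by (rule ent)
    next
      fix u :: real assume u: "u > 0"
      show "f u = u powr (2 * (\<alpha> - 1)) * (\<Sum>n. cK n * (u powr (2 * \<alpha>)) ^ n)"
        unfolding f_def using KGs[of "u^2"] u by (simp add: sq_powr)
    qed
    define c1 where "c1 k = cK k * (Gamma (\<eta>1 + (\<alpha>-1) + \<alpha>*real k + 1) / Gamma (\<eta>1 + (\<alpha>-1) + \<alpha>*real k + 1 - \<alpha>))" for k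
    have g1: "inC \<alpha> (\<alpha>-1) c1 (EK 2 \<eta>1 (-\<alpha>) f)"
      unfolding c1_def by (rule inC_EK_neg[OF fC al(1) al(1) al(2)]) (use e1 in simp)
    define c2 where "c2 k = c1 k * (Gamma (0 + (\<alpha>-1) + \<alpha>*real k + 1) / Gamma (0 + (\<alpha>-1) + \<alpha>*real k + 1 - \<alpha>))" for k
    have g2: "inC \<alpha> (\<alpha>-1) c2 (EK 2 0 (-\<alpha>) (EK 2 \<eta>1 (-\<alpha>) f))"
      unfolding c2_def by (rule inC_EK_neg[OF g1 al(1) al(1) al(2)]) simp
    have c20: "c2 0 = 0" by (simp add: c2_def)
    have c2S: "c2 (Suc k) = -(q^2) * cK k" for k
    proof -
      have a1: "\<eta>1 + (\<alpha>-1) + \<alpha>*real (Suc k) + 1 = \<alpha>*real (Suc k) + \<alpha> + \<eta>1" by (simp add: algebra_simps)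
      have a2: "\<eta>1 + (\<alpha>-1) + \<alpha>*real (Suc k) + 1 - \<alpha> = \<alpha>*real k + \<alpha> + \<eta>1" by (simp add: algebra_simps)
      have a3: "0 + (\<alpha>-1) + \<alpha>*real (Suc k) + 1 = \<alpha>*real (Suc k) + \<alpha>" by (simp add: algebra_simps)
      have a4: "0 + (\<alpha>-1) + \<alpha>*real (Suc k) + 1 - \<alpha> = \<alpha>*real k + \<alpha>" by (simp add: algebra_simps)
      have pos: "x > 0 \<Longrightarrow> Gamma x \<noteq> 0" for x :: real using Gamma_real_pos[of x] by linarith
      have p1: "\<alpha>*real (Suc k) + \<alpha> + \<eta>1 > 0" "\<alpha>*real k + \<alpha> + \<eta>1 > 0" "\<alpha>*real (Suc k) + \<alpha> > 0" "\<alpha>*real k + \<alpha> > 0"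
        using al(1) e1 by (smt (verit) of_nat_0_le_iff mult_nonneg_nonneg)+
      show ?thesis unfolding c2_def c1_def cK_def a1 a2 a3 a4
        using pos[OF p1(1)] pos[OF p1(2)] pos[OF p1(3)] pos[OF p1(4)] by (simp add: field_simps)
    qed
    define Z where "Z = w powr (2*\<alpha>)"
    have g2w: "EK 2 0 (-\<alpha>) (EK 2 \<eta>1 (-\<alpha>) f) w = w powr (2*(\<alpha>-1)) * (\<Sum>n. c2 n * Z^n)"
      using g2 w unfolding inC_def Z_def by simp
    have fw: "KG_sol N \<alpha> lam c (w\<^sup>2) = w powr (2*(\<alpha>-1)) * (\<Sum>n. cK n * Z^n)"
      using fC w unfolding inC_def Z_def f_def by simp
    have sumS: "(\<Sum>n. c2 n * Z^n) = Z * (-(q^2)) * (\<Sum>n. cK n * Z^n)"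
    proof -
      have s2: "(\<lambda>n. c2 n * Z^n) sums (\<Sum>n. c2 n * Z^n)"
        using g2 unfolding inC_def by (intro summable_sums) auto
      hence "(\<lambda>n. c2 (Suc n) * Z^(Suc n)) sums (\<Sum>n. c2 n * Z^n)"
        using c20 sums_Suc_iff[of "\<lambda>n. c2 n * Z^n" "\<Sum>n. c2 n * Z^n"] by simp
      hence A: "(\<lambda>n. Z * (-(q^2)) * (cK n * Z^n)) sums (\<Sum>n. c2 n * Z^n)"
        using c20 by (simp add: c2S algebra_simps)
      have B: "(\<lambda>n. Z * (-(q^2)) * (cK n * Z^n)) sums (Z * (-(q^2)) * (\<Sum>n. cK n * Z^n))"
        by (intro sums_mult summable_sums ent)
      show ?thesis using sums_unique2[OF A B] .
    qed
    have Zw: "w powr (-2*\<alpha>) * Z = 1" unfolding Z_def using w by (simp add: powr_add[symmetric])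
    have q4: "4 powr \<alpha> * q^2 = lam^2 / c powr (2*\<alpha>)"
    proof -
      have h4: "(4::real) powr \<alpha> = 2 powr (2*\<alpha>)"
        using powr_powr[of "2::real" 2 \<alpha>] by simp
      have "q^2 = lam^2 / ((2 powr \<alpha>)^2 * (c powr \<alpha>)^2)"
        unfolding q_def by (simp add: power_divide power_mult_distrib)
      also have "(2 powr \<alpha>)^2 = (2::real) powr (2*\<alpha>)" by (simp add: powr_pow mult.commute)
      also have "(c powr \<alpha>)^2 = c powr (2*\<alpha>)" using cpos by (simp add: powr_pow mult.commute)
      finally show ?thesis unfolding h4 by simp
    qed
    have "frac_bessel_op N \<alpha> f w = 4 powr \<alpha> * w powr (- 2 * \<alpha>) * EK 2 0 (-\<alpha>) (EK 2 \<eta>1 (-\<alpha>) f) w"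
      unfolding frac_bessel_op_def \<eta>1_def by simp
    also have "\<dots> = (4 powr \<alpha> * q^2) * (w powr (- 2 * \<alpha>) * Z) * (- (w powr (2*(\<alpha>-1)) * (\<Sum>n. cK n * Z^n)))"
      unfolding g2w sumS by (simp add: algebra_simps)
    also have "\<dots> = - (lam\<^sup>2 / c powr (2 * \<alpha>)) * KG_sol N \<alpha> lam c (w\<^sup>2)"
      unfolding q4 Zw fw by simp
    finally show "frac_bessel_op N \<alpha> (\<lambda>v. KG_sol N \<alpha> lam c (v\<^sup>2)) w = - (lam\<^sup>2 / c powr (2 * \<alpha>)) * KG_sol N \<alpha> lam c (w\<^sup>2)"
      unfolding f_def .
  next
    fix x :: "nat \<Rightarrow> real" and t :: real
    assume "c\<^sup>2 * t\<^sup>2 - (\<Sum>j = 1..N. (x j)\<^sup>2) > 0"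
    thus "let s = c\<^sup>2 * t\<^sup>2 - (\<Sum>j = 1..N. (x j)\<^sup>2) in summable (KG_term N \<alpha> lam c s)
              \<and> KG_sol N \<alpha> lam c s
                  = s powr (\<alpha> - 1) *
                    multi_ML [\<alpha>, \<alpha>] [\<alpha>, \<alpha> + (real N - 1) / 2]
                      (- (lam * s powr (\<alpha> / 2) / (2 powr \<alpha> * c powr \<alpha>))\<^sup>2)"
      unfolding Let_def by (rule part2)
  qed
qed

end
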